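(* Let $d \ge 2$. As $\{r^{(1)}, r^{(2)}\}$ ranges over all pairs of incomparable points of $(0,1)^d$ whose $2d$ coordinates are all distinct, the set of possible values of the number $\gamma$ of generators of their record-setting region is exactly $\{ d + a(d-a) : 1 \le a \le \lfloor d/2 \rfloor\}$.
   Context: For $x,y \in \mathbb{R}^d$, $x \prec y$ means $x_j < y_j$ for all $j$, and $x \le y$ means $x_j \le y_j$ for all $j$; points are incomparable if neither is $\le$ the other. The record-setting region of points $r^{(1)},\dots,r^{(\rho)}$ is $S := \{x \in [0,1)^d : x \not\prec r^{(i)} \text{ for all } i \in [\rho]\}$, and its generators are the minimal elements of $S$ with respect to $\le$. *)

theory Defs
  imports "HOL-Analysis.Analysis"
begin

text \<open>Points of R^d are vectors real^'n with d = CARD('n).\<close>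

definition vprec :: "real^'n \<Rightarrow> real^'n \<Rightarrow> bool" where
  "vprec x y \<longleftrightarrow> (\<forall>j. x$j < y$j)"

definition vle :: "real^'n \<Rightarrow> real^'n \<Rightarrow> bool" where
  "vle x y \<longleftrightarrow> (\<forall>j. x$j \<le> y$j)"

definition incomparable :: "real^'n \<Rightarrow> real^'n \<Rightarrow> bool" where
  "incomparable x y \<longleftrightarrow> \<not> vle x y \<and> \<not> vle y x"

definition record_region :: "(real^'n) set \<Rightarrow> (real^'n) set" where
  "record_region R = {x. (\<forall>j. 0 \<le> x$j \<and> x$j < 1) \<and> (\<forall>r\<in>R. \<not> vprec x r)}"

definition generators :: "(real^'n) set \<Rightarrow> (real^'n) set" where
  "generators S = {x\<in>S. \<forall>y\<in>S. vle y x \<longrightarrow> y = x}"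

end

theory Submission
  imports Defs
begin

definition ax :: "'n \<Rightarrow> real \<Rightarrow> real^'n" where
  "ax i m = (\<chi> k. if k = i then m else 0)"

definition pt :: "'n \<Rightarrow> real \<Rightarrow> 'n \<Rightarrow> real \<Rightarrow> real^'n" where
  "pt i u j v = (\<chi> k. if k = i then u else if k = j then v else 0)"

lemma S_iff:
  "x \<in> record_region {r1, r2} \<longleftrightarrow> (\<forall>j. 0 \<le> x$j \<and> x$j < 1) \<and> (\<exists>i. r1$i \<le> x$i) \<and> (\<exists>j. r2$j \<le> x$j)"
  unfolding record_region_def vprec_def by (auto simp: not_less)

lemma gen_char:
  fixes r1 r2 :: "real^'n"
  assumes pos: "\<forall>j. 0 < r1$j \<and> r1$j < 1 \<and> 0 < r2$j \<and> r2$j < 1"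
    and ne: "\<forall>j. r1$j \<noteq> r2$j"
  shows "generators (record_region {r1, r2}) =
     range (\<lambda>i. ax i (max (r1$i) (r2$i))) \<union>
     (\<lambda>(i,j). pt i (r1$i) j (r2$j)) ` ({i. r1$i < r2$i} \<times> {j. r2$j < r1$j})"
  (is "?G = ?G1 \<union> ?G2")
proof
  let ?S = "record_region {r1, r2}"
  have p1: "\<And>j. 0 < r1$j" and p2: "\<And>j. 0 < r2$j" using pos by auto
  have axS: "ax i (max (r1$i) (r2$i)) \<in> ?S" for i
    using pos unfolding S_iff ax_def by (auto intro!: exI[of _ i] simp: max_def p1 p2 less_imp_le)
  have ax1S: "r2$i \<le> r1$i \<Longrightarrow> ax i (r1$i) \<in> ?S" for i
    using pos unfolding S_iff ax_def by (auto intro!: exI[of _ i] simp: p1 p2 less_imp_le)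
  have ax2S: "r1$i \<le> r2$i \<Longrightarrow> ax i (r2$i) \<in> ?S" for i
    using pos unfolding S_iff ax_def by (auto intro!: exI[of _ i] simp: p1 p2 less_imp_le)
  have ptS: "pt i (r1$i) j (r2$j) \<in> ?S" if "i \<noteq> j" for i j
  proof -
    have "\<forall>k. 0 \<le> (pt i (r1$i) j (r2$j))$k \<and> (pt i (r1$i) j (r2$j))$k < 1"
      using pos unfolding pt_def by (auto simp: less_imp_le)
    moreover have "r1$i \<le> (pt i (r1$i) j (r2$j))$i" "r2$j \<le> (pt i (r1$i) j (r2$j))$j"
      using that unfolding pt_def by auto
    ultimately show ?thesis unfolding S_iff by blast
  qed
  show "?G \<subseteq> ?G1 \<union> ?G2"
  proof
    fix x assume xG: "x \<in> ?G"
    hence xS: "x \<in> ?S" and minx: "\<And>y. y \<in> ?S \<Longrightarrow> vle y x \<Longrightarrow> y = x"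
      unfolding generators_def by auto
    from xS obtain i j where bx: "\<forall>k. 0 \<le> x$k \<and> x$k < 1" and i: "r1$i \<le> x$i" and j: "r2$j \<le> x$j"
      unfolding S_iff by blast
    show "x \<in> ?G1 \<union> ?G2"
    proof (cases "i = j")
      case True
      have "vle (ax i (max (r1$i) (r2$i))) x"
        using bx i j True unfolding vle_def ax_def by auto
      hence "ax i (max (r1$i) (r2$i)) = x" using minx axS by blast
      thus ?thesis by auto
    next
      case False
      let ?z = "pt i (r1$i) j (r2$j)"
      have "vle ?z x" using bx i j False unfolding vle_def pt_def by auto
      hence zx: "?z = x" using minx ptS[OF False] by blast
      have zmin: "\<And>y. y \<in> ?S \<Longrightarrow> vle y ?z \<Longrightarrow> y = ?z" using minx zx by simp
      have A: "r1$i < r2$i"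
      proof (rule ccontr)
        assume "\<not> r1$i < r2$i"
        hence h: "r2$i \<le> r1$i" by simp
        have "vle (ax i (r1$i)) ?z" using pos False unfolding vle_def ax_def pt_def
          by (auto simp: less_imp_le)
        hence "ax i (r1$i) = ?z" using zmin ax1S[OF h] by blast
        hence "(ax i (r1$i))$j = ?z$j" by simp
        thus False using False p2[of j] unfolding ax_def pt_def by auto
      qed
      have B: "r2$j < r1$j"
      proof (rule ccontr)
        assume "\<not> r2$j < r1$j"
        hence h: "r1$j \<le> r2$j" by simp
        have "vle (ax j (r2$j)) ?z" using pos False unfolding vle_def ax_def pt_def
          by (auto simp: less_imp_le)
        hence "ax j (r2$j) = ?z" using zmin ax2S[OF h] by blast
        hence "(ax j (r2$j))$i = ?z$i" by simp
        thus False using False p1[of i] unfolding ax_def pt_def by auto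
      qed
      have "x \<in> ?G2" using A B zx by (auto intro!: image_eqI[of _ _ "(i,j)"])
      thus ?thesis by simp
    qed
  qed
  show "?G1 \<union> ?G2 \<subseteq> ?G"
  proof
    fix z assume "z \<in> ?G1 \<union> ?G2"
    thus "z \<in> ?G"
    proof
      assume "z \<in> ?G1"
      then obtain i where z: "z = ax i (max (r1$i) (r2$i))" by auto
      have "y = z" if yS: "y \<in> ?S" and yz: "vle y z" for y
      proof -
        from yS obtain k l where yb: "\<forall>k. 0 \<le> y$k \<and> y$k < 1" and k: "r1$k \<le> y$k" and l: "r2$l \<le> y$l"
          unfolding S_iff by blast
        have le: "\<And>m. y$m \<le> z$m" using yz unfolding vle_def by auto
        have zero: "y$m = 0" if "m \<noteq> i" for m
        proof -
          have "y$m \<le> z$m" by (rule le)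
          also have "z$m = 0" using that unfolding z ax_def by simp
          finally show ?thesis using yb by (meson order_antisym)
        qed
        have "k = i" by (rule ccontr) (use zero[of k] k p1[of k] in auto)
        moreover have "l = i" by (rule ccontr) (use zero[of l] l p2[of l] in auto)
        ultimately have "y$i = max (r1$i) (r2$i)" using k l le[of i] unfolding z ax_def by auto
        thus ?thesis using zero unfolding z ax_def by (auto simp: vec_eq_iff)
      qed
      thus ?thesis using axS z unfolding generators_def by auto
    next
      assume "z \<in> ?G2"
      then obtain i j where z: "z = pt i (r1$i) j (r2$j)" and A: "r1$i < r2$i" and B: "r2$j < r1$j" by auto
      have ij: "i \<noteq> j" using A B by auto
      have "y = z" if yS: "y \<in> ?S" and yz: "vle y z" for y
      proof -
        from yS obtain k l where yb: "\<forall>k. 0 \<le> y$k \<and> y$k < 1" and k: "r1$k \<le> y$k" and l: "r2$l \<le> y$l"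
          unfolding S_iff by blast
        have le: "\<And>m. y$m \<le> z$m" using yz unfolding vle_def by auto
        have zero: "y$m = 0" if "m \<noteq> i" "m \<noteq> j" for m
        proof -
          have "y$m \<le> z$m" by (rule le)
          also have "z$m = 0" using that unfolding z pt_def by simp
          finally show ?thesis using yb by (meson order_antisym)
        qed
        have lei: "y$i \<le> r1$i" and lej: "y$j \<le> r2$j" using le[of i] le[of j] ij unfolding z pt_def by auto
        have "k = i \<or> k = j" by (rule ccontr) (use zero[of k] k p1[of k] in auto)
        hence yi: "y$i = r1$i" using k lei lej B by auto
        have "l = i \<or> l = j" by (rule ccontr) (use zero[of l] l p2[of l] in auto)
        hence yj: "y$j = r2$j" using l lei lej A by auto
        show ?thesis using zero yi yj ij unfolding z pt_def by (auto simp: vec_eq_iff)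
      qed
      thus ?thesis using ptS[OF ij] z unfolding generators_def by auto
    qed
  qed
qed



lemma gen_card:
  fixes r1 r2 :: "real^'n"
  assumes pos: "\<forall>j. 0 < r1$j \<and> r1$j < 1 \<and> 0 < r2$j \<and> r2$j < 1"
    and ne: "\<forall>j. r1$j \<noteq> r2$j"
  shows "card (generators (record_region {r1, r2})) =
     CARD('n) + card {i. r1$i < r2$i} * (CARD('n) - card {i. r1$i < r2$i})"
proof -
  let ?A = "{i. r1$i < r2$i}" and ?B = "{j. r2$j < r1$j}"
  have p1: "\<And>j. 0 < r1$j" and p2: "\<And>j. 0 < r2$j" using pos by auto
  have inj1: "inj (\<lambda>i. ax i (max (r1$i) (r2$i)))"
  proof (rule injI)
    fix i i' assume "ax i (max (r1$i) (r2$i)) = ax i' (max (r1$i') (r2$i'))"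
    hence "(ax i (max (r1$i) (r2$i)))$i = (ax i' (max (r1$i') (r2$i')))$i" by simp
    thus "i = i'" using p1[of i] p2[of i] unfolding ax_def by (auto split: if_splits simp: max_def)
  qed
  have inj2: "inj_on (\<lambda>(i,j). pt i (r1$i) j (r2$j)) (?A \<times> ?B)"
  proof (rule inj_onI, clarsimp)
    fix i j i' j' assume A: "r1$i < r2$i" "r1$i' < r2$i'" and B: "r2$j < r1$j" "r2$j' < r1$j'"
      and eq: "pt i (r1$i) j (r2$j) = pt i' (r1$i') j' (r2$j')"
    have ij: "i \<noteq> j" "i' \<noteq> j'" using A B by auto
    have "(pt i (r1$i) j (r2$j))$i = (pt i' (r1$i') j' (r2$j'))$i" using eq by simp
    hence 1: "i = i'" using p1[of i] ne ij unfolding pt_def by (auto split: if_splits)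
    have "(pt i (r1$i) j (r2$j))$j = (pt i' (r1$i') j' (r2$j'))$j" using eq by simp
    hence "j = j'" using p2[of j] ne ij 1 unfolding pt_def by (auto split: if_splits)
    with 1 show "i = i' \<and> j = j'" by simp
  qed
  have disj: "range (\<lambda>i. ax i (max (r1$i) (r2$i))) \<inter> (\<lambda>(i,j). pt i (r1$i) j (r2$j)) ` (?A \<times> ?B) = {}"
  proof (rule ccontr)
    assume "\<not> ?thesis"
    then obtain k i j where A: "r1$i < r2$i" and B: "r2$j < r1$j"
      and eq: "ax k (max (r1$k) (r2$k)) = pt i (r1$i) j (r2$j)" by auto
    have ij: "i \<noteq> j" using A B by auto
    have "(ax k (max (r1$k) (r2$k)))$i = (pt i (r1$i) j (r2$j))$i" using eq by simp
    hence "k = i" using p1[of i] unfolding ax_def pt_def by (auto split: if_splits)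
    have "(ax k (max (r1$k) (r2$k)))$j = (pt i (r1$i) j (r2$j))$j" using eq by simp
    hence "k = j" using p2[of j] ij unfolding ax_def pt_def by (auto split: if_splits)
    with \<open>k = i\<close> ij show False by simp
  qed
  have B: "?B = UNIV - ?A" using ne by (auto simp: neq_iff)
  have cB: "card ?B = CARD('n) - card ?A" unfolding B by (simp add: card_Diff_subset)
  have "card (generators (record_region {r1, r2})) =
      card (range (\<lambda>i. ax i (max (r1$i) (r2$i)))) + card ((\<lambda>(i,j). pt i (r1$i) j (r2$j)) ` (?A \<times> ?B))"
    unfolding gen_char[OF pos ne] by (rule card_Un_disjoint) (use disj in auto)
  also have "\<dots> = CARD('n) + card ?A * card ?B"
    using card_image[OF inj1] card_image[OF inj2] by (simp add: card_cartesian_product)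
  finally show ?thesis using cB by simp
qed


theorem mainTheorem5:
  assumes "CARD('n::finite) \<ge> 2"
  shows "{card (generators (record_region {r1, r2})) | r1 r2 :: real^'n.
            (\<forall>j. 0 < r1$j \<and> r1$j < 1 \<and> 0 < r2$j \<and> r2$j < 1)
          \<and> incomparable r1 r2
          \<and> (\<forall>i j. r1$i = r1$j \<longrightarrow> i = j)
          \<and> (\<forall>i j. r2$i = r2$j \<longrightarrow> i = j)
          \<and> (\<forall>i j. r1$i \<noteq> r2$j)}
       = {CARD('n) + a * (CARD('n) - a) | a. 1 \<le> a \<and> a \<le> CARD('n) div 2}"
  (is "?L = ?R")
proof
  define d where "d = CARD('n)"
  have d2: "d \<ge> 2" using assms d_def by simp
  show "?L \<subseteq> ?R"
  proof
    fix c assume "c \<in> ?L"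
    then obtain r1 r2 :: "real^'n" where c: "c = card (generators (record_region {r1, r2}))"
      and pos: "\<forall>j. 0 < r1$j \<and> r1$j < 1 \<and> 0 < r2$j \<and> r2$j < 1"
      and inc: "incomparable r1 r2" and d3: "\<forall>i j. r1$i \<noteq> r2$j" by blast
    have ne: "\<forall>j. r1$j \<noteq> r2$j" using d3 by blast
    define A where "A = {i. r1$i < r2$i}"
    have cc: "c = d + card A * (d - card A)" using gen_card[OF pos ne] c A_def d_def by simp
    from inc obtain j0 j1 where j0: "r2$j0 < r1$j0" and j1: "r1$j1 < r2$j1"
      unfolding incomparable_def vle_def by (auto simp: not_le)
    have "A \<noteq> {}" using j1 A_def by auto
    hence a1: "card A \<ge> 1" by (simp add: Suc_le_eq card_gt_0_iff)
    have "j0 \<notin> A" using j0 A_def by auto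
    hence "A \<subset> UNIV" by auto
    hence a2: "card A < d" unfolding d_def by (rule psubset_card_mono[OF finite])
    show "c \<in> ?R"
    proof (cases "card A \<le> d div 2")
      case True
      thus ?thesis using cc a1 unfolding d_def by blast
    next
      case False
      have "c = d + (d - card A) * (d - (d - card A))" using cc a2 by (simp add: mult.commute)
      moreover have "1 \<le> d - card A" "d - card A \<le> d div 2" using a2 False by auto
      ultimately show ?thesis unfolding d_def by blast
    qed
  qed
  show "?R \<subseteq> ?L"
  proof
    fix c assume "c \<in> ?R"
    then obtain a where c: "c = d + a * (d - a)" and a1: "1 \<le> a" and a2: "a \<le> d div 2"
      unfolding d_def by blast
    have ad: "a < d" using a2 d2 by auto
    obtain f :: "'n \<Rightarrow> nat" where f: "bij_betw f UNIV {0..<d}"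
      using ex_bij_betw_finite_nat[of "UNIV :: 'n set"] d_def by auto
    have finj: "inj f" using f by (simp add: bij_betw_def)
    have frange: "f ` UNIV = {0..<d}" using f by (simp add: bij_betw_def)
    have fd: "f k < d" for k using frange by auto
    define p where "p k = real (f k + 1) / (2 * real d + 2)" for k
    have p0: "0 < p k" for k unfolding p_def by simp
    have ph: "p k < 1/2" for k
    proof -
      have "real (f k + 1) \<le> real d" using fd[of k] by simp
      thus ?thesis unfolding p_def by (simp add: field_simps)
    qed
    have pinj: "p i = p j \<Longrightarrow> i = j" for i j
      using finj unfolding p_def inj_def by (simp add: field_simps)
    define r1 :: "real^'n" where "r1 = (\<chi> k. if f k < a then p k else p k + 1/2)"
    define r2 :: "real^'n" where "r2 = (\<chi> k. if f k < a then p k + 1/2 else p k)"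
    have pos: "\<forall>j. 0 < r1$j \<and> r1$j < 1 \<and> 0 < r2$j \<and> r2$j < 1"
    proof
      fix j
      show "0 < r1$j \<and> r1$j < 1 \<and> 0 < r2$j \<and> r2$j < 1"
        using p0[of j] ph[of j] unfolding r1_def r2_def by (cases "f j < a") auto
    qed
    obtain k0 where k0: "f k0 = 0" using frange d2 by (metis atLeastLessThan_iff imageE le0 less_le_trans pos2)
    obtain k1 where k1: "f k1 = d - 1" using frange d2
      by (metis atLeastLessThan_iff diff_less imageE le0 less_le_trans pos2 zero_less_one)
    have inc: "incomparable r1 r2"
      unfolding incomparable_def vle_def
    proof (intro conjI notI)
      assume "\<forall>j. r1$j \<le> r2$j"
      hence "r1$k1 \<le> r2$k1" by blast
      moreover have "\<not> f k1 < a" using k1 ad by simp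
      ultimately show False unfolding r1_def r2_def by simp
    next
      assume "\<forall>j. r2$j \<le> r1$j"
      hence "r2$k0 \<le> r1$k0" by blast
      thus False using k0 a1 unfolding r1_def r2_def by auto
    qed
    have dd1: "\<forall>i j. r1$i = r1$j \<longrightarrow> i = j"
    proof (intro allI impI)
      fix i j assume "r1$i = r1$j"
      thus "i = j" using pinj[of i j] p0[of i] p0[of j] ph[of i] ph[of j]
        unfolding r1_def by (auto split: if_splits)
    qed
    have dd2: "\<forall>i j. r2$i = r2$j \<longrightarrow> i = j"
    proof (intro allI impI)
      fix i j assume "r2$i = r2$j"
      thus "i = j" using pinj[of i j] p0[of i] p0[of j] ph[of i] ph[of j]
        unfolding r2_def by (auto split: if_splits)
    qed
    have dd3: "\<forall>i j. r1$i \<noteq> r2$j"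
    proof (intro allI notI)
      fix i j assume "r1$i = r2$j"
      thus False using pinj[of i j] p0[of i] p0[of j] ph[of i] ph[of j]
        unfolding r1_def r2_def by (auto split: if_splits)
    qed
    have ne: "\<forall>j. r1$j \<noteq> r2$j" using dd3 by blast
    have Aeq: "{i. r1$i < r2$i} = {i. f i < a}" unfolding r1_def r2_def by auto
    have "f ` {i. f i < a} = {0..<a}" using frange ad by force
    moreover have "inj_on f {i. f i < a}" using finj by (simp add: inj_on_def inj_def)
    ultimately have cA: "card {i. f i < a} = a" by (metis card_atLeastLessThan card_image diff_zero)
    have "c = card (generators (record_region {r1, r2}))"
      using gen_card[OF pos ne] Aeq cA c d_def by simp
    thus "c \<in> ?L" using pos inc dd1 dd2 dd3 by blast
  qed
qed

end
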